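(* Let $\mathbf X$ be a compact metric space and $Y>0$. Consider the on-line regression protocol in which, at each round $n=1,2,\dots$, Reality announces a signal $x_n\in\mathbf X$, then Predictor announces a prediction $\mu_n\in\mathbb R$, then Reality announces an observation $y_n\in[-Y,Y]$. There exists a strategy for Predictor which guarantees that, for every continuous function $F:\mathbf X\to\mathbb R$ and every sequence of moves of Reality, $$\limsup_{N\to\infty}\left(\frac1N\sum_{n=1}^N (y_n-\mu_n)^2-\frac1N\sum_{n=1}^N (y_n-F(x_n))^2\right)\le 0 .$$
   Context: A strategy for Predictor is a function mapping each finite history $(x_1,y_1,\dots,x_{n-1},y_{n-1},x_n)$ to the prediction $\mu_n$; Reality may choose its moves adaptively, and the guarantee must hold for all such choices. *)

theory Defs
  imports "HOL-Analysis.Analysis" "HOL-Library.Liminf_Limsup"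
begin

text \<open>A Predictor strategy maps the finite history ((x_1,y_1),...,(x_{n-1},y_{n-1}))
  (as a list, oldest first) and the current signal x_n to the prediction mu_n.\<close>
type_synonym 'a predictor = "('a \<times> real) list \<Rightarrow> 'a \<Rightarrow> real"

definition pred_at :: "'a predictor \<Rightarrow> (nat \<Rightarrow> 'a) \<Rightarrow> (nat \<Rightarrow> real) \<Rightarrow> nat \<Rightarrow> real" where
  "pred_at P x y n = P (map (\<lambda>i. (x i, y i)) [0..<n]) (x n)"

end

theory Submission
  imports Defs
begin



lemma exp_quad: fixes u :: real assumes "\<bar>u\<bar> \<le> 1" shows "exp u \<le> 1 + u + u^2"
proof (cases "u \<ge> 0")
  case True then show ?thesis using exp_bound[of u] assms by auto
next
  case False
  define v where "v = -u"
  have v: "0 < v" "v \<le> 1" using False assms v_def by auto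
  have "1 + v \<le> exp v" by (rule exp_ge_add_one_self)
  hence "exp u \<le> 1 / (1 + v)" using v by (simp add: v_def exp_minus field_simps)
  also have "\<dots> \<le> 1 - v + v^2"
    using v by (simp add: field_simps power2_eq_square)
  finally show ?thesis by (simp add: v_def)
qed

lemma tangent:
  fixes Y p m y :: real
  assumes Y: "Y > 0" and p: "\<bar>p\<bar> \<le> Y" and m: "\<bar>m\<bar> \<le> Y" and y: "\<bar>y\<bar> \<le> Y"
  defines "\<eta> \<equiv> 1 / (64 * Y^2)"
  shows "exp (- \<eta> * (y - p)^2) \<le> exp (- \<eta> * (y - m)^2) * (1 + 2 * \<eta> * (y - m) * (p - m))"
proof -
  define a where "a = y - m"
  define t where "t = p - m"
  define u where "u = 2 * \<eta> * a * t"
  have eta: "\<eta> > 0" "32 * \<eta> * Y^2 = 1/2" using Y by (auto simp: \<eta>_def)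
  have a: "\<bar>a\<bar> \<le> 2*Y" and t: "\<bar>t\<bar> \<le> 2*Y" using p m y by (auto simp: a_def t_def)
  have at: "\<bar>a * t\<bar> \<le> 4 * Y^2" using mult_mono[OF a t] Y by (simp add: abs_mult power2_eq_square)
  have "\<bar>u\<bar> = 2 * \<eta> * \<bar>a*t\<bar>" using eta by (simp add: u_def abs_mult)
  also have "\<dots> \<le> 2 * \<eta> * (4 * Y^2)" using at eta by simp
  also have "\<dots> = 1/8" using eta by (simp add: algebra_simps)
  finally have u: "\<bar>u\<bar> \<le> 1/8" .
  have a2: "a^2 \<le> 4 * Y^2" using power_mono[OF a, of 2] by (simp add: power_mult_distrib)
  have "u^2 = 4 * \<eta>^2 * a^2 * t^2" by (simp add: u_def power_mult_distrib)
  also have "\<dots> \<le> 4 * \<eta>^2 * (4 * Y^2) * t^2" using a2 eta by (intro mult_right_mono mult_left_mono) auto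
  also have "\<dots> = (\<eta> * t^2) / 4" using eta by (simp add: power2_eq_square algebra_simps)
  finally have u2: "u^2 \<le> (\<eta> * t^2) / 4" .
  have e1: "exp u \<le> 1 + u + u^2" using u by (intro exp_quad) auto
  have e2: "exp (- (\<eta> * t^2)) * (1 + \<eta> * t^2) \<le> 1"
    using exp_ge_add_one_self[of "\<eta> * t^2"] by (simp add: exp_minus field_simps)
  have "(1 + u + u^2) \<le> (1 + u) * (1 + \<eta> * t^2)"
  proof -
    have "u^2 \<le> (1+u) * (\<eta> * t^2)"
    proof -
      have "0 \<le> \<eta> * t^2" using eta by simp
      hence "(1/4) * (\<eta> * t^2) \<le> (1+u) * (\<eta> * t^2)"
        using u by (intro mult_right_mono) auto
      hence "(\<eta> * t^2) / 4 \<le> (1+u) * (\<eta> * t^2)" by simp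
      thus ?thesis using u2 by linarith
    qed
    thus ?thesis by (simp add: algebra_simps)
  qed
  hence "exp u * exp (- (\<eta> * t^2)) \<le> (1 + u) * (1 + \<eta> * t^2) * exp (- (\<eta> * t^2))"
    using e1 by (intro mult_right_mono) auto
  also have "\<dots> = (1 + u) * ((1 + \<eta> * t^2) * exp (- (\<eta> * t^2)))" by (simp add: mult.assoc)
  also have "\<dots> \<le> (1 + u) * 1" using e2 u by (intro mult_left_mono) (auto simp: mult.commute)
  finally have key: "exp (u - \<eta> * t^2) \<le> 1 + u" by (simp add: exp_diff exp_minus divide_inverse)
  have yp: "(y - p)^2 = a^2 - 2*a*t + t^2" by (simp add: a_def t_def power2_eq_square algebra_simps)
  have "- \<eta> * (y - p)^2 = - \<eta> * a^2 + (u - \<eta> * t^2)" unfolding yp u_def by (simp add: algebra_simps)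
  hence "exp (- \<eta> * (y - p)^2) = exp (- \<eta> * a^2) * exp (u - \<eta> * t^2)" by (metis exp_add)
  also have "\<dots> \<le> exp (- \<eta> * a^2) * (1 + u)" using key by (intro mult_left_mono) auto
  finally show ?thesis by (simp add: a_def t_def u_def mult.assoc)
qed



definition clip :: "real \<Rightarrow> real \<Rightarrow> real" where "clip Y v = max (- Y) (min Y v)"

definition lossk :: "(nat \<Rightarrow> 'a \<Rightarrow> real) \<Rightarrow> real \<Rightarrow> ('a \<times> real) list \<Rightarrow> nat \<Rightarrow> real" where
  "lossk e Y h k = sum_list (map (\<lambda>(x', y'). (y' - clip Y (e k x'))^2) h)"

definition etaY :: "real \<Rightarrow> real" where "etaY Y = 1 / (64 * Y^2)"

definition wt :: "(nat \<Rightarrow> 'a \<Rightarrow> real) \<Rightarrow> real \<Rightarrow> ('a \<times> real) list \<Rightarrow> nat \<Rightarrow> real" where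
  "wt e Y h k = (1/2)^(Suc k) * exp (- etaY Y * lossk e Y h k)"

definition AA :: "(nat \<Rightarrow> 'a \<Rightarrow> real) \<Rightarrow> real \<Rightarrow> 'a predictor" where
  "AA e Y h x = (\<Sum>k. wt e Y h k * clip Y (e k x)) / (\<Sum>k. wt e Y h k)"

lemma clip_abs: "Y > 0 \<Longrightarrow> \<bar>clip Y v\<bar> \<le> Y" by (auto simp: clip_def)

lemma clip_better: "\<bar>y\<bar> \<le> Y \<Longrightarrow> (y - clip Y v)^2 \<le> (y - v)^2"
  unfolding clip_def by (rule abs_le_square_iff[THEN iffD1]) auto

lemma lossk_hist:
  "lossk e Y (map (\<lambda>i. (x i, y i)) [0..<N]) k = (\<Sum>n<N. (y n - clip Y (e k (x n)))^2)"
  by (induct N) (auto simp: lossk_def)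

lemma summable_half: "summable (\<lambda>k. (1/2::real)^(Suc k))"
  using summable_mult[OF summable_geometric[of "1/2::real"], of "1/2"] by simp

lemma suminf_half: "(\<Sum>k. (1/2::real)^(Suc k)) = 1"
proof -
  have "(\<Sum>k. (1/2::real)^(Suc k)) = (\<Sum>k. (1/2) * (1/2::real)^k)" by simp
  also have "\<dots> = (1/2) * (\<Sum>k. (1/2::real)^k)"
    by (rule suminf_mult) simp
  also have "\<dots> = 1" by (simp add: suminf_geometric)
  finally show ?thesis .
qed

lemma wt_nonneg: "0 \<le> wt e Y h k" by (simp add: wt_def)
lemma wt_pos: "0 < wt e Y h k" by (simp add: wt_def)

lemma summable_wt: "Y > 0 \<Longrightarrow> summable (wt e Y h)"
proof (rule summable_comparison_test'[OF summable_half])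
  fix k assume "Y > 0"
  have "lossk e Y h k \<ge> 0" unfolding lossk_def by (intro sum_list_nonneg) auto
  moreover have "etaY Y > 0" using \<open>Y > 0\<close> by (simp add: etaY_def)
  ultimately have "exp (- etaY Y * lossk e Y h k) \<le> 1" by (simp add: mult_nonneg_nonneg)
  thus "norm (wt e Y h k) \<le> (1/2)^(Suc k)" unfolding wt_def
    by (simp add: mult_left_le del: power_Suc)
qed

lemma summable_wtp: assumes "Y > 0" shows "summable (\<lambda>k. wt e Y h k * clip Y (e k z))"
proof (rule summable_comparison_test'[OF summable_mult[OF summable_wt[OF assms], of Y]])
  fix k
  show "norm (wt e Y h k * clip Y (e k z)) \<le> Y * wt e Y h k"
    using mult_left_mono[OF clip_abs[OF assms] wt_nonneg[of e Y h k], of "e k z"]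
    by (simp add: abs_mult mult.commute abs_of_nonneg[OF wt_nonneg])
qed

lemma aggregate:
  assumes Y: "Y > 0" and y: "\<forall>n. \<bar>y n\<bar> \<le> Y"
  shows "(\<Sum>n<N. (y n - pred_at (AA e Y) x y n)^2)
           \<le> (\<Sum>n<N. (y n - clip Y (e k (x n)))^2) + real (Suc k) * ln 2 / etaY Y"
proof -
  define h where "h N = map (\<lambda>i. (x i, y i)) [0..<N]" for N
  define \<eta> where "\<eta> = etaY Y"
  have eta: "\<eta> > 0" using Y by (simp add: \<eta>_def etaY_def)
  define W where "W N = (\<Sum>k. wt e Y (h N) k)" for N
  define LP where "LP N = (\<Sum>n<N. (y n - pred_at (AA e Y) x y n)^2)" for N
  have W: "W N \<le> exp (- \<eta> * LP N)" for N
  proof (induct N)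
    case 0
    have "W 0 = (\<Sum>k. (1/2::real)^Suc k)" by (simp add: W_def h_def wt_def lossk_def del: power_Suc)
    hence "W 0 = 1" using suminf_half by simp
    thus ?case by (simp add: LP_def)
  next
    case (Suc N)
    define p where "p k = clip Y (e k (x N))" for k
    define S0 where "S0 = W N"
    define S1 where "S1 = (\<Sum>k. wt e Y (h N) k * p k)"
    define \<mu> where "\<mu> = pred_at (AA e Y) x y N"
    define a where "a = y N - \<mu>"
    have p: "\<bar>p k\<bar> \<le> Y" for k using clip_abs[OF Y] by (simp add: p_def)
    have mu: "\<mu> = S1 / S0"
      by (simp add: \<mu>_def pred_at_def AA_def S1_def S0_def W_def h_def p_def)
    have s0: "wt e Y (h N) sums S0" unfolding S0_def W_def by (rule summable_sums[OF summable_wt[OF Y]])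
    have s1: "(\<lambda>k. wt e Y (h N) k * p k) sums S1" unfolding S1_def p_def
      by (rule summable_sums[OF summable_wtp[OF Y]])
    have S0pos: "S0 > 0" unfolding S0_def W_def
      by (rule suminf_pos[OF summable_wt[OF Y]]) (rule wt_pos)
    have pu: "wt e Y (h N) k * p k \<le> Y * wt e Y (h N) k" for k
      using mult_left_mono[OF _ wt_nonneg, of "p k" Y e Y "h N" k] p[of k] by (simp add: mult.commute)
    have pl: "- Y * wt e Y (h N) k \<le> wt e Y (h N) k * p k" for k
      using mult_left_mono[OF _ wt_nonneg, of "-Y" "p k" e Y "h N" k] p[of k] by (simp add: mult.commute)
    have "S1 \<le> Y * S0"
      by (rule sums_le[OF pu s1 sums_mult[OF s0, of Y]])
    moreover have "- Y * S0 \<le> S1"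
      by (rule sums_le[OF pl sums_mult[OF s0, of "-Y"] s1])
    ultimately have mub: "\<bar>\<mu>\<bar> \<le> Y" using S0pos by (simp add: mu abs_le_iff divide_le_eq le_divide_eq)
    have S1: "S1 = \<mu> * S0" using S0pos by (simp add: mu)
    have wstep: "wt e Y (h (Suc N)) k = wt e Y (h N) k * exp (- \<eta> * (y N - p k)^2)" for k
      by (simp add: wt_def h_def lossk_def p_def \<eta>_def exp_add[symmetric] algebra_simps)
    define c1 where "c1 = exp (- \<eta> * a^2) * (1 - 2 * \<eta> * a * \<mu>)"
    define c2 where "c2 = exp (- \<eta> * a^2) * (2 * \<eta> * a)"
    have le: "wt e Y (h (Suc N)) k \<le> c1 * wt e Y (h N) k + c2 * (wt e Y (h N) k * p k)" for k
    proof -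
      have "wt e Y (h (Suc N)) k \<le> wt e Y (h N) k * (exp (- \<eta> * a^2) * (1 + 2 * \<eta> * a * (p k - \<mu>)))"
        unfolding wstep a_def \<eta>_def etaY_def
        by (intro mult_left_mono tangent[OF Y p mub]) (auto simp: y wt_nonneg)
      also have "\<dots> = c1 * wt e Y (h N) k + c2 * (wt e Y (h N) k * p k)"
        by (simp add: c1_def c2_def algebra_simps)
      finally show ?thesis .
    qed
    have "W (Suc N) \<le> c1 * S0 + c2 * S1"
      unfolding W_def
      by (rule sums_le[OF le summable_sums[OF summable_wt[OF Y]] sums_add[OF sums_mult[OF s0] sums_mult[OF s1]]])
    also have "\<dots> = exp (- \<eta> * a^2) * S0" by (simp add: c1_def c2_def S1 algebra_simps)
    also have "\<dots> \<le> exp (- \<eta> * a^2) * exp (- \<eta> * LP N)" using Suc by (simp add: S0_def)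
    also have "\<dots> = exp (- \<eta> * LP (Suc N))"
      by (simp add: LP_def a_def \<mu>_def exp_add[symmetric] algebra_simps)
    finally show ?case .
  qed
  have "wt e Y (h N) k \<le> W N" unfolding W_def
    using sum_le_suminf[OF summable_wt[OF Y, of e "h N"], of "{k}"] wt_nonneg by auto
  with W[of N] have "(1/2)^(Suc k) * exp (- \<eta> * lossk e Y (h N) k) \<le> exp (- \<eta> * LP N)"
    by (simp add: wt_def \<eta>_def)
  hence "ln ((1/2)^(Suc k) * exp (- \<eta> * lossk e Y (h N) k)) \<le> ln (exp (- \<eta> * LP N))"
    by (subst ln_le_cancel_iff) auto
  hence "- real (Suc k) * ln 2 - \<eta> * lossk e Y (h N) k \<le> - \<eta> * LP N"
    by (simp add: ln_mult ln_realpow ln_div algebra_simps del: power_Suc)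
  hence "\<eta> * LP N \<le> \<eta> * lossk e Y (h N) k + real (Suc k) * ln 2" by (simp add: algebra_simps)
  hence "LP N \<le> lossk e Y (h N) k + real (Suc k) * ln 2 / \<eta>"
    using eta by (simp add: field_simps)
  thus ?thesis by (simp add: LP_def lossk_hist h_def \<eta>_def)
qed

lemma experts_exist:
  fixes X :: "'a::metric_space set"
  assumes X: "compact X"
  shows "\<exists>e::nat \<Rightarrow> 'a \<Rightarrow> real. \<forall>F. continuous_on X F \<longrightarrow> (\<forall>\<delta>>0. \<exists>k. \<forall>z\<in>X. \<bar>e k z - F z\<bar> \<le> \<delta>)"
proof -
  have "\<exists>ds. set ds \<subseteq> X \<and> X \<subseteq> (\<Union>d\<in>set ds. ball d (1 / real (Suc m)))" for m
  proof -
    have "X \<subseteq> (\<Union>c\<in>X. ball c (1 / real (Suc m)))" by auto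
    then obtain C where C: "C \<subseteq> X" "finite C" "X \<subseteq> (\<Union>c\<in>C. ball c (1 / real (Suc m)))"
      using compactE_image[OF X, of X "\<lambda>c. ball c (1 / real (Suc m))"] by auto
    then obtain ds where "set ds = C" using finite_list by blast
    thus ?thesis using C by auto
  qed
  then obtain ds where ds: "\<And>m. set (ds m) \<subseteq> X \<and> X \<subseteq> (\<Union>d\<in>set (ds m). ball d (1 / real (Suc m)))"
    by metis
  define idx where "idx m z = (SOME i. i < length (ds m) \<and> dist (ds m ! i) z < 1 / real (Suc m))" for m z
  have idx: "idx m z < length (ds m) \<and> dist (ds m ! idx m z) z < 1 / real (Suc m)" if "z \<in> X" for m z
  proof -
    from ds[of m] that obtain d where "d \<in> set (ds m)" "dist d z < 1 / real (Suc m)" by auto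
    then obtain i where "i < length (ds m)" "ds m ! i = d" by (auto simp: in_set_conv_nth)
    hence "\<exists>i. i < length (ds m) \<and> dist (ds m ! i) z < 1 / real (Suc m)" using \<open>dist d z < _\<close> by blast
    thus ?thesis unfolding idx_def by (rule someI_ex)
  qed
  define E where "E w z = real_of_rat (snd w ! idx (fst w) z)" for w :: "nat \<times> rat list" and z
  define e where "e k = E (from_nat k)" for k
  have "\<forall>F. continuous_on X F \<longrightarrow> (\<forall>\<delta>>0. \<exists>k. \<forall>z\<in>X. \<bar>e k z - F z\<bar> \<le> \<delta>)"
  proof (intro allI impI)
    fix F :: "'a \<Rightarrow> real" and \<delta> :: real
    assume F: "continuous_on X F" and d: "\<delta> > 0"
    have "uniformly_continuous_on X F" by (rule compact_uniformly_continuous[OF F X])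
    then obtain r where r: "r > 0" "\<And>z z'. z \<in> X \<Longrightarrow> z' \<in> X \<Longrightarrow> dist z' z < r \<Longrightarrow> dist (F z') (F z) < \<delta>/2"
      unfolding uniformly_continuous_on_def using d by (metis half_gt_zero)
    obtain m where m: "inverse (real (Suc m)) < r" using reals_Archimedean[OF r(1)] by auto
    have qex: "\<exists>q::rat. \<bar>real_of_rat q - v\<bar> < \<delta>/2" for v
    proof -
      obtain t where "t \<in> \<rat>" "v - \<delta>/2 < t" "t < v" using Rats_dense_in_real[of "v - \<delta>/2" v] d by auto
      then obtain q where "t = real_of_rat q" by (auto elim: Rats_cases)
      thus ?thesis using \<open>v - \<delta>/2 < t\<close> \<open>t < v\<close> by (intro exI[of _ q]) auto
    qed
    define qs where "qs = map (\<lambda>dd. SOME q::rat. \<bar>real_of_rat q - F dd\<bar> < \<delta>/2) (ds m)"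
    show "\<exists>k. \<forall>z\<in>X. \<bar>e k z - F z\<bar> \<le> \<delta>"
    proof (intro exI[of _ "to_nat (m, qs)"] ballI)
      fix z assume z: "z \<in> X"
      define i where "i = idx m z"
      have i: "i < length (ds m)" "dist (ds m ! i) z < 1 / real (Suc m)" using idx[OF z, of m] by (auto simp: i_def)
      have dm: "ds m ! i \<in> X" using ds[of m] i(1) by auto
      have ek: "e (to_nat (m, qs)) z = real_of_rat (qs ! i)" by (simp add: e_def E_def i_def)
      have q: "\<bar>real_of_rat (qs ! i) - F (ds m ! i)\<bar> < \<delta>/2"
        unfolding qs_def using i(1) someI_ex[OF qex[of "F (ds m ! i)"]] by simp
      have "dist (ds m ! i) z < r" using i(2) m by (simp add: inverse_eq_divide)
      hence "dist (F (ds m ! i)) (F z) < \<delta>/2" using r(2)[OF z dm] by simp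
      hence "\<bar>F (ds m ! i) - F z\<bar> < \<delta>/2" by (simp add: dist_real_def)
      thus "\<bar>e (to_nat (m, qs)) z - F z\<bar> \<le> \<delta>" using q ek by linarith
    qed
  qed
  thus ?thesis by blast
qed

theorem theorem1:
  fixes X :: "'a::metric_space set" and Y :: real
  assumes "compact X" and "Y > 0"
  shows "\<exists>P :: 'a predictor.
           \<forall>F. continuous_on X F \<longrightarrow>
             (\<forall>x y. (\<forall>n. x n \<in> X \<and> \<bar>y n\<bar> \<le> Y) \<longrightarrow>
                limsup (\<lambda>N. ereal ((\<Sum>n<N. (y n - pred_at P x y n)^2) / real N
                                   - (\<Sum>n<N. (y n - F (x n))^2) / real N)) \<le> 0)"
proof -
  obtain e :: "nat \<Rightarrow> 'a \<Rightarrow> real" where e0: "\<forall>F. continuous_on X F \<longrightarrow> (\<forall>\<delta>>0. \<exists>k. \<forall>z\<in>X. \<bar>e k z - F z\<bar> \<le> \<delta>)"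
    using experts_exist[OF assms(1)] by blast
  have e: "\<exists>k. \<forall>z\<in>X. \<bar>e k z - F z\<bar> \<le> \<delta>" if "continuous_on X F" "\<delta> > 0" for F \<delta>
    using e0 that by blast
  have Y: "Y > 0" by fact
  show ?thesis
  proof (intro exI[of _ "AA e Y"] allI impI)
    fix F :: "'a \<Rightarrow> real" and x :: "nat \<Rightarrow> 'a" and y :: "nat \<Rightarrow> real"
    assume F: "continuous_on X F" and xy: "\<forall>n. x n \<in> X \<and> \<bar>y n\<bar> \<le> Y"
    have yb: "\<forall>n. \<bar>y n\<bar> \<le> Y" using xy by auto
    have "bounded (F ` X)" by (rule compact_imp_bounded[OF compact_continuous_image[OF F assms(1)]])
    then obtain M0 where M0: "\<And>z. z \<in> X \<Longrightarrow> \<bar>F z\<bar> \<le> M0" unfolding bounded_iff by auto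
    define M where "M = max M0 0"
    have M: "\<And>z. z \<in> X \<Longrightarrow> \<bar>F z\<bar> \<le> M" "M \<ge> 0" using M0 by (force simp: M_def)+
    define c where "c = 2 * (Y + M) + 1"
    have c: "c > 0" using M Y by (simp add: c_def)
    define f where "f N = (\<Sum>n<N. (y n - pred_at (AA e Y) x y n)^2) / real N
                                   - (\<Sum>n<N. (y n - F (x n))^2) / real N" for N
    have leps: "limsup (\<lambda>N. ereal (f N)) \<le> 0 + ereal \<epsilon>" if eps: "\<epsilon> > 0" for \<epsilon> :: real
    proof -
      define \<delta> where "\<delta> = min 1 (\<epsilon> / (2 * c))"
      have dl1: "\<delta> > 0" using eps c by (simp add: \<delta>_def)
      have dl2: "\<delta> \<le> 1" by (simp add: \<delta>_def)
      have "\<delta> \<le> \<epsilon> / (2 * c)" by (simp add: \<delta>_def)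
      hence "\<delta> * c \<le> \<epsilon> / (2 * c) * c" using c by (intro mult_right_mono) auto
      also have "\<epsilon> / (2 * c) * c = \<epsilon> / 2" using c by simp
      finally have dl3: "\<delta> * c \<le> \<epsilon> / 2" .
      note dl = dl1 dl2 dl3
      obtain k where k: "\<And>z. z \<in> X \<Longrightarrow> \<bar>e k z - F z\<bar> \<le> \<delta>" using e[OF F dl(1)] by blast
      have round: "(y n - clip Y (e k (x n)))^2 \<le> (y n - F (x n))^2 + \<epsilon> / 2" for n
      proof -
        have xn: "x n \<in> X" "\<bar>y n\<bar> \<le> Y" using xy by auto
        let ?a = "e k (x n)" and ?b = "F (x n)"
        have "(y n - ?a)^2 - (y n - ?b)^2 = (?b - ?a) * (2 * y n - ?a - ?b)"
          by (simp add: power2_eq_square algebra_simps)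
        also have "\<dots> \<le> \<bar>(?b - ?a) * (2 * y n - ?a - ?b)\<bar>" by (rule abs_ge_self)
        also have "\<dots> = \<bar>?b - ?a\<bar> * \<bar>2 * y n - ?a - ?b\<bar>" by (rule abs_mult)
        also have "\<dots> \<le> \<delta> * c"
        proof (intro mult_mono)
          show "\<bar>?b - ?a\<bar> \<le> \<delta>" using k[OF xn(1)] by simp
          have "\<bar>?a\<bar> \<le> M + \<delta>" using k[OF xn(1)] M(1)[OF xn(1)] by linarith
          hence a1: "?a \<le> M + \<delta>" and a2: "- ?a \<le> M + \<delta>" by (simp_all only: abs_le_iff)
          have b1: "?b \<le> M" and b2: "- ?b \<le> M" using M(1)[OF xn(1)] by (simp_all only: abs_le_iff)
          have y1: "y n \<le> Y" and y2: "- y n \<le> Y" using xn(2) by (simp_all only: abs_le_iff)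
          have "2 * y n - ?a - ?b \<le> c" using a2 b2 y1 dl(2) unfolding c_def by (smt (verit))
          moreover have "- (2 * y n - ?a - ?b) \<le> c" using a1 b1 y2 dl(2) unfolding c_def by (smt (verit))
          ultimately show "\<bar>2 * y n - ?a - ?b\<bar> \<le> c" by (simp only: abs_le_iff)
        qed (use dl in auto)
        finally have "(y n - ?a)^2 \<le> (y n - ?b)^2 + \<epsilon>/2" using dl(3) by linarith
        moreover have "(y n - clip Y ?a)^2 \<le> (y n - ?a)^2" by (rule clip_better[OF xn(2)])
        ultimately show ?thesis by linarith
      qed
      define C0 where "C0 = real (Suc k) * ln 2 / etaY Y"
      have C0: "C0 \<ge> 0" using Y by (simp add: C0_def etaY_def)
      obtain N0 :: nat where N0: "N0 > 2 * C0 / \<epsilon>" using reals_Archimedean2 by blast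
      have "eventually (\<lambda>N. ereal (f N) \<le> ereal \<epsilon>) sequentially"
      proof (rule eventually_sequentiallyI[of "Suc N0"])
        fix N :: nat assume N: "N \<ge> Suc N0"
        have Npos: "real N > 0" using N by simp
        have "(\<Sum>n<N. (y n - pred_at (AA e Y) x y n)^2) \<le> (\<Sum>n<N. (y n - clip Y (e k (x n)))^2) + C0"
          unfolding C0_def by (rule aggregate[OF Y yb])
        also have "\<dots> \<le> (\<Sum>n<N. (y n - F (x n))^2 + \<epsilon>/2) + C0"
          by (intro add_right_mono sum_mono round)
        also have "\<dots> = (\<Sum>n<N. (y n - F (x n))^2) + real N * (\<epsilon>/2) + C0"
          by (simp add: sum.distrib)
        finally have L: "(\<Sum>n<N. (y n - pred_at (AA e Y) x y n)^2) - (\<Sum>n<N. (y n - F (x n))^2)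
                          \<le> real N * (\<epsilon>/2) + C0" by linarith
        have "2 * C0 / \<epsilon> < real N" using N0 N by linarith
        hence C0N: "2 * C0 < real N * \<epsilon>" using pos_divide_less_eq[OF eps] by blast
        have hN: "real N * (\<epsilon>/2) = (real N * \<epsilon>) / 2" by simp
        have AB: "(\<Sum>n<N. (y n - pred_at (AA e Y) x y n)^2) - (\<Sum>n<N. (y n - F (x n))^2) \<le> \<epsilon> * real N"
          proof -
          define D where "D = (\<Sum>n<N. (y n - pred_at (AA e Y) x y n)^2) - (\<Sum>n<N. (y n - F (x n))^2)"
          define Q where "Q = real N * \<epsilon>"
          have "D \<le> Q / 2 + C0" using L hN unfolding D_def Q_def by simp
          moreover have "2 * C0 < Q" using C0N unfolding Q_def .
          ultimately have "D \<le> Q" by linarith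
          thus ?thesis unfolding D_def Q_def by (simp add: mult.commute)
        qed
        have fN: "f N = ((\<Sum>n<N. (y n - pred_at (AA e Y) x y n)^2) - (\<Sum>n<N. (y n - F (x n))^2)) / real N"
          unfolding f_def by (rule diff_divide_distrib[symmetric])
        have "f N \<le> \<epsilon>" unfolding fN using AB pos_divide_le_eq[OF Npos] by blast
        thus "ereal (f N) \<le> ereal \<epsilon>" by simp
      qed
      hence "limsup (\<lambda>N. ereal (f N)) \<le> ereal \<epsilon>" by (rule Limsup_bounded)
      thus ?thesis by (simp only: add_0_left)
    qed
    have "limsup (\<lambda>N. ereal (f N)) \<le> 0" by (rule ereal_le_epsilon2[OF leps])
    thus "limsup (\<lambda>N. ereal ((\<Sum>n<N. (y n - pred_at (AA e Y) x y n)^2) / real N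
                                   - (\<Sum>n<N. (y n - F (x n))^2) / real N)) \<le> 0"
      by (simp add: f_def)
  qed
qed
end
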